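(* For each $j=1,\dots,m$ and $t>0$, \[\sup_{s\le t}\left|{R_N}_j(s)-\int_0^sa_j(X(u))\,du\right|\to0\quad\text{a.s. as }N\to\infty.\]
   Context: Fix integers $n,m\ge1$, vectors $\nu_1,\dots,\nu_m\in\mathbb{Z}^n$ and $c=(c_1,\dots,c_m)$ with all $c_j>0$; $|\cdot|$ is a fixed norm. For each $N\ge1$ and $j$, $a_j^N(x)=c_jb_j^N(x)$ with $b_j^N:\mathbb{R}^n\to\mathbb{R}$ nonnegative on $\mathbb{Z}_+^n$. Standing assumptions: (i) for each $j$ and $x\in\mathbb{R}_+^n$ the limit $a_j(x)=\lim_Na_j^N(Nx)/N$ exists, and for each compact $K\subset\mathbb{R}_+^n$ there is $B_K>0$ with $|a_j^N(Nx)/N-a_j(x)|\le B_K/N$ for $x\in K$, $N\ge1$, all $j$; (ii) each $a_j$ is continuously differentiable on $\mathbb{R}^n$; (iii) $x_0\in\mathbb{R}_+^n$ is fixed, $N$ ranges over positive integers with $Nx_0\in\mathbb{Z}_+^n$, and on a probability space with independent unit-rate Poisson processes $Y_1,\dots,Y_m$, $X^N$ solves $X^N(t)=Nx_0+\sum_jY_j\big(\int_0^ta_j^N(X^N(s))ds\big)\nu_j$; (iv) with $X_N(t)=X^N(t)/N$, there is $\Gamma$ with $|X_N(t)|\le\Gamma$ a.s. for all $t\ge0$, $N$. $X$ is the solution of $X(t)=x_0+\sum_j\nu_j\int_0^ta_j(X(s))ds$, $t\ge0$. $R_j^N(t)=Y_j\big(\int_0^ta_j^N(X^N(s))ds\big)$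 and ${R_N}_j(t)=R_j^N(t)/N$. *)

theory Defs
  imports "HOL-Analysis.Analysis" "HOL-Probability.Probability"
begin

definition Zplus :: "(real ^ 'n) set" where
  "Zplus = {x. \<forall>i. x $ i \<in> \<nat>}"

definition Rplus :: "(real ^ 'n) set" where
  "Rplus = {x. \<forall>i. 0 \<le> x $ i}"

definition unit_poisson_process :: "'a measure \<Rightarrow> ('a \<Rightarrow> real \<Rightarrow> real) \<Rightarrow> bool" where
  "unit_poisson_process M Y \<longleftrightarrow>
     (\<forall>t\<ge>0. (\<lambda>\<omega>. Y \<omega> t) \<in> borel_measurable M) \<and>
     (\<forall>\<omega>\<in>space M. Y \<omega> 0 = 0 \<and> mono_on {0..} (Y \<omega>) \<and>
        (\<forall>t\<ge>0. Y \<omega> t \<in> \<nat> \<and> continuous (at_right t) (Y \<omega>))) \<and>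
     (\<forall>s t. 0 \<le> s \<and> s < t \<longrightarrow>
        (\<forall>k::nat. measure M {\<omega>\<in>space M. Y \<omega> t - Y \<omega> s = real k}
                  = pmf (poisson_pmf (t - s)) k)) \<and>
     (\<forall>(\<tau>::nat \<Rightarrow> real) k. 0 \<le> \<tau> 0 \<and> (\<forall>i<k. \<tau> i < \<tau> (Suc i)) \<longrightarrow>
        prob_space.indep_vars M (\<lambda>_. borel) (\<lambda>i \<omega>. Y \<omega> (\<tau> (Suc i)) - Y \<omega> (\<tau> i)) {..<k})"

end

theory Submission
  imports Defs
begin

lemma exp_neg_bound:
  fixes x :: real assumes "0 \<le> x" "x \<le> 1"
  shows "exp (-x) \<le> 1 - x + x\<^sup>2"
proof -
  have "1 + x \<le> exp x" by (rule exp_ge_add_one_self)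
  hence "exp (-x) \<le> 1 / (1 + x)" using assms
    by (simp add: exp_minus field_simps)
  also have "1 / (1 + x) \<le> 1 - x + x\<^sup>2"
  proof -
    have "1 \<le> (1 + x) * (1 - x + x\<^sup>2)" using assms by (simp add: power2_eq_square algebra_simps)
    thus ?thesis using assms by (simp add: field_simps)
  qed
  finally show ?thesis .
qed

lemma pois_series:
  fixes l \<theta> :: real assumes l: "0 < l"
  shows "(\<lambda>k. exp (\<theta> * real k) * pmf (poisson_pmf l) k) sums exp (l * (exp \<theta> - 1))"
proof -
  have "(\<lambda>k. (l * exp \<theta>)^k /\<^sub>R fact k) sums exp (l * exp \<theta>)" by (rule exp_converges)
  hence "(\<lambda>k. (l * exp \<theta>)^k /\<^sub>R fact k * exp (-l)) sums (exp (l * exp \<theta>) * exp (-l))"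
    by (rule sums_mult2)
  moreover have "exp (l * exp \<theta>) * exp (-l) = exp (l * (exp \<theta> - 1))"
    by (simp add: exp_diff exp_minus field_simps)
  moreover have "(l * exp \<theta>)^k /\<^sub>R fact k * exp (-l) = exp (\<theta> * real k) * pmf (poisson_pmf l) k" for k
    using l by (simp add: power_mult_distrib exp_of_nat2_mult[symmetric] field_simps)
  ultimately show ?thesis by simp
qed

lemma pois_tail:
  fixes M :: "'w measure" and Z :: "'w \<Rightarrow> real" and l \<epsilon> :: real
  assumes P: "prob_space M" and Zm: "Z \<in> borel_measurable M"
    and Znat: "\<forall>\<omega>\<in>space M. Z \<omega> \<in> \<nat>"
    and Zd: "\<forall>k::nat. measure M {\<omega>\<in>space M. Z \<omega> = real k} = pmf (poisson_pmf l) k"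
    and l: "0 < l" and e: "0 < \<epsilon>" "\<epsilon> \<le> 1"
  shows "measure M {\<omega>\<in>space M. \<epsilon> * l \<le> \<bar>Z \<omega> - l\<bar>} \<le> 2 * exp (- l * \<epsilon>\<^sup>2 / 4)"
proof -
  interpret prob_space M by (rule P)
  define A where "A k = {\<omega>\<in>space M. Z \<omega> = real k \<and> \<epsilon> * l \<le> \<bar>real k - l\<bar>}" for k :: nat
  have Asets: "range A \<subseteq> sets M" unfolding A_def using Zm by auto
  have disj: "disjoint_family A" unfolding A_def disjoint_family_on_def by auto
  have U: "(\<Union>k. A k) = {\<omega>\<in>space M. \<epsilon> * l \<le> \<bar>Z \<omega> - l\<bar>}"
  proof (intro set_eqI iffI)
    fix \<omega> assume "\<omega> \<in> {\<omega>\<in>space M. \<epsilon> * l \<le> \<bar>Z \<omega> - l\<bar>}"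
    moreover then obtain k where "Z \<omega> = real k" using Znat by (metis (no_types, lifting) Nats_cases mem_Collect_eq)
    ultimately show "\<omega> \<in> (\<Union>k. A k)" unfolding A_def by auto
  qed (auto simp: A_def)
  have S: "(\<lambda>k. measure M (A k)) sums measure M {\<omega>\<in>space M. \<epsilon> * l \<le> \<bar>Z \<omega> - l\<bar>}"
    using finite_measure_UNION[OF Asets disj] U by simp
  define \<theta> where "\<theta> = \<epsilon> / 2"
  have th: "0 < \<theta>" "\<theta> \<le> 1" using e by (auto simp: \<theta>_def)
  define g where "g k = exp (- \<theta> * (1 + \<epsilon>) * l) * (exp (\<theta> * real k) * pmf (poisson_pmf l) k)
       + exp (\<theta> * (1 - \<epsilon>) * l) * (exp ((-\<theta>) * real k) * pmf (poisson_pmf l) k)" for k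
  define G where "G = exp (- \<theta> * (1 + \<epsilon>) * l) * exp (l * (exp \<theta> - 1))
       + exp (\<theta> * (1 - \<epsilon>) * l) * exp (l * (exp (-\<theta>) - 1))"
  have gS: "g sums G" unfolding g_def G_def
    by (intro sums_add sums_mult pois_series l)
  have le: "measure M (A k) \<le> g k" for k
  proof (cases "\<epsilon> * l \<le> \<bar>real k - l\<bar>")
    case True
    have mA: "measure M (A k) = pmf (poisson_pmf l) k" using Zd True unfolding A_def by simp
    have p0: "0 \<le> pmf (poisson_pmf l) k" by simp
    have "1 \<le> exp (- \<theta> * (1 + \<epsilon>) * l) * exp (\<theta> * real k) + exp (\<theta> * (1 - \<epsilon>) * l) * exp ((-\<theta>) * real k)"
    proof -
      have q1: "exp (- \<theta> * (1 + \<epsilon>) * l) * exp (\<theta> * real k) = exp (\<theta> * (real k - l - \<epsilon> * l))"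
        by (simp add: exp_add[symmetric] algebra_simps)
      have q2: "exp (\<theta> * (1 - \<epsilon>) * l) * exp ((-\<theta>) * real k) = exp (\<theta> * (l - \<epsilon> * l - real k))"
        by (simp add: exp_add[symmetric] algebra_simps)
      have "0 \<le> real k - l - \<epsilon> * l \<or> 0 \<le> l - \<epsilon> * l - real k"
        using \<open>\<epsilon> * l \<le> \<bar>real k - l\<bar>\<close> by (cases "real k < l") auto
      hence "1 \<le> exp (\<theta> * (real k - l - \<epsilon> * l)) \<or> 1 \<le> exp (\<theta> * (l - \<epsilon> * l - real k))"
        using th by auto
      moreover have "0 \<le> exp (\<theta> * (real k - l - \<epsilon> * l))" "0 \<le> exp (\<theta> * (l - \<epsilon> * l - real k))" by auto
      ultimately show ?thesis unfolding q1 q2 by linarith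
    qed
    hence "pmf (poisson_pmf l) k \<le> (exp (- \<theta> * (1 + \<epsilon>) * l) * exp (\<theta> * real k) + exp (\<theta> * (1 - \<epsilon>) * l) * exp ((-\<theta>) * real k)) * pmf (poisson_pmf l) k"
      using p0 by (metis mult_1 mult_right_mono mult.commute)
    thus ?thesis unfolding mA g_def by (simp add: algebra_simps)
  next
    case False
    hence "A k = {}" unfolding A_def by auto
    moreover have "0 \<le> g k" unfolding g_def by simp
    ultimately show ?thesis by simp
  qed
  have "measure M {\<omega>\<in>space M. \<epsilon> * l \<le> \<bar>Z \<omega> - l\<bar>} \<le> G" using sums_le[OF _ S gS] le by blast
  also have "G \<le> 2 * exp (- l * \<epsilon>\<^sup>2 / 4)"
  proof -
    have e1: "exp \<theta> \<le> 1 + \<theta> + \<theta>\<^sup>2" using exp_bound th by auto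
    have e2: "exp (-\<theta>) \<le> 1 - \<theta> + \<theta>\<^sup>2" using exp_neg_bound th by auto
    have "- \<theta> * (1 + \<epsilon>) * l + l * (exp \<theta> - 1) \<le> - \<theta> * (1 + \<epsilon>) * l + l * (\<theta> + \<theta>\<^sup>2)"
      using e1 l by (intro add_left_mono mult_left_mono) auto
    also have "\<dots> = - l * \<epsilon>\<^sup>2 / 4" by (simp add: \<theta>_def power2_eq_square field_simps)
    finally have a1: "exp (- \<theta> * (1 + \<epsilon>) * l) * exp (l * (exp \<theta> - 1)) \<le> exp (- l * \<epsilon>\<^sup>2 / 4)"
      by (simp add: exp_add[symmetric])
    have "\<theta> * (1 - \<epsilon>) * l + l * (exp (-\<theta>) - 1) \<le> \<theta> * (1 - \<epsilon>) * l + l * (- \<theta> + \<theta>\<^sup>2)"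
      using e2 l by (intro add_left_mono mult_left_mono) auto
    also have "\<dots> = - l * \<epsilon>\<^sup>2 / 4" by (simp add: \<theta>_def power2_eq_square field_simps)
    finally have a2: "exp (\<theta> * (1 - \<epsilon>) * l) * exp (l * (exp (-\<theta>) - 1)) \<le> exp (- l * \<epsilon>\<^sup>2 / 4)"
      by (simp add: exp_add[symmetric])
    show ?thesis using a1 a2 unfolding G_def by linarith
  qed
  finally show ?thesis .
qed

definition PoisGood :: "(real \<Rightarrow> real) \<Rightarrow> bool" where
  "PoisGood y \<longleftrightarrow> y 0 = 0 \<and> mono_on {0..} y \<and> (\<forall>\<epsilon>>0. \<exists>\<Lambda>\<ge>1. \<forall>l\<ge>\<Lambda>. \<bar>y l - l\<bar> \<le> \<epsilon> * l + 1)"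

lemma pois_good_det:
  fixes y :: "real \<Rightarrow> real"
  assumes y0: "y 0 = 0" and mono: "mono_on {0..} y"
    and ev: "\<forall>m::nat. eventually (\<lambda>n::nat. \<bar>y (real n) - real n\<bar> < real n / real (Suc m)) sequentially"
  shows "PoisGood y"
  unfolding PoisGood_def
proof (intro conjI y0 mono allI impI)
  fix \<epsilon> :: real assume e: "0 < \<epsilon>"
  obtain n1 :: nat where n1: "n1 > 0" "inverse (real n1) < \<epsilon> / 2" using ex_inverse_of_nat_less[of "\<epsilon>/2"] e
    by auto
  obtain m where sm: "n1 = Suc m" using n1(1) gr0_implies_Suc by blast
  have m: "1 / real (Suc m) < \<epsilon> / 2" using n1(2) unfolding sm by (simp only: divide_inverse mult_1)
  define \<delta> where "\<delta> = 1 / real (Suc m)"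
  have d: "0 < \<delta>" "2 * \<delta> \<le> \<epsilon>" using m by (auto simp: \<delta>_def)
  obtain n0 where n0: "\<And>n. n \<ge> n0 \<Longrightarrow> \<bar>y (real n) - real n\<bar> < real n / real (Suc m)"
    using ev[rule_format, of m] unfolding eventually_sequentially by blast
  have n0': "\<bar>y (real n) - real n\<bar> < \<delta> * real n" if "n \<ge> n0" for n
    using n0[OF that] by (simp add: \<delta>_def)
  show "\<exists>\<Lambda>\<ge>1. \<forall>l\<ge>\<Lambda>. \<bar>y l - l\<bar> \<le> \<epsilon> * l + 1"
  proof (intro exI[of _ "real n0 + 1"] conjI allI impI)
    fix l assume l: "real n0 + 1 \<le> l"
    define n where "n = nat \<lfloor>l\<rfloor>"
    have l0: "0 \<le> l" using l by simp
    have nl: "real n \<le> l" "l < real n + 1" using l0 unfolding n_def by linarith+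
    have "real n0 < real n" using l nl by linarith
    hence "n0 < n" by simp
    hence nn0: "n \<ge> n0" by simp
    have y1: "y (real n) \<le> y l" by (rule mono_onD[OF mono]) (use nl l0 in auto)
    have y2: "y l \<le> y (real (Suc n))" by (rule mono_onD[OF mono]) (use nl l0 in auto)
    have b1: "\<bar>y (real n) - real n\<bar> < \<delta> * real n" using n0' nn0 by blast
    have b2: "\<bar>y (real (Suc n)) - real (Suc n)\<bar> < \<delta> * real (Suc n)" by (rule n0') (use nn0 in simp)
    have c1: "\<delta> * real (Suc n) \<le> \<delta> * (2 * l)" using d nl l by (intro mult_left_mono) auto
    have c2: "\<delta> * (2 * l) \<le> \<epsilon> * l" using d l0 mult_right_mono[of "2 * \<delta>" \<epsilon> l] by (simp add: mult.assoc)
    have c3: "\<delta> * real n \<le> \<delta> * (2 * l)" using d nl l0 by (intro mult_left_mono) auto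
    have b1': "y (real n) - real n < \<delta> * real n" "-(\<delta> * real n) < y (real n) - real n" using b1 by (auto simp: abs_less_iff)
    have b2': "y (real (Suc n)) - real (Suc n) < \<delta> * real (Suc n)" using b2 by (auto simp: abs_less_iff)
    have "real (Suc n) = real n + 1" by simp
    hence u: "y l - l \<le> \<epsilon> * l + 1" using y2 b2' c1 c2 nl by linarith
    have v: "-(\<epsilon> * l + 1) \<le> y l - l" using y1 b1' c3 c2 nl by linarith
    show "\<bar>y l - l\<bar> \<le> \<epsilon> * l + 1" using u v by (simp add: abs_le_iff)
  qed simp
qed

lemma pois_good:
  fixes M :: "'w measure" and Y :: "'w \<Rightarrow> real \<Rightarrow> real"
  assumes P: "prob_space M" and UP: "unit_poisson_process M Y"
  shows "AE \<omega> in M. PoisGood (Y \<omega>)"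
proof -
  interpret prob_space M by (rule P)
  have meas: "\<And>t. t \<ge> 0 \<Longrightarrow> (\<lambda>\<omega>. Y \<omega> t) \<in> borel_measurable M"
    and path: "\<forall>\<omega>\<in>space M. Y \<omega> 0 = 0 \<and> mono_on {0..} (Y \<omega>) \<and> (\<forall>t\<ge>0. Y \<omega> t \<in> \<nat> \<and> continuous (at_right t) (Y \<omega>))"
    and dist: "\<And>s t k. 0 \<le> s \<Longrightarrow> s < t \<Longrightarrow> measure M {\<omega>\<in>space M. Y \<omega> t - Y \<omega> s = real k} = pmf (poisson_pmf (t - s)) k"
    using UP unfolding unit_poisson_process_def by auto
  have step: "AE \<omega> in M. eventually (\<lambda>n::nat. \<bar>Y \<omega> (real n) - real n\<bar> < e * real n) sequentially"
    if e: "0 < e" "e \<le> 1" for e :: real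
  proof -
    define A where "A n = {\<omega>\<in>space M. e * real n \<le> \<bar>Y \<omega> (real n) - real n\<bar>}" for n :: nat
    have Am: "A n \<in> sets M" for n
    proof -
      have "(\<lambda>\<omega>. Y \<omega> (real n)) \<in> borel_measurable M" using meas by simp
      thus ?thesis unfolding A_def by measurable
    qed
    have Ab: "measure M (A n) \<le> 2 * exp (- e\<^sup>2 / 4) ^ n" for n
    proof (cases "n = 0")
      case True
      have "prob (A n) \<le> 1" by (rule prob_le_1)
      moreover have "2 * exp (- e\<^sup>2 / 4) ^ n = 2" using True by simp
      ultimately show ?thesis by linarith
    next
      case False
      hence np: "0 < real n" by simp
      have "measure M (A n) \<le> 2 * exp (- real n * e\<^sup>2 / 4)" unfolding A_def
      proof (rule pois_tail[OF P])
        show "(\<lambda>\<omega>. Y \<omega> (real n)) \<in> borel_measurable M" using meas by simp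
        show "\<forall>\<omega>\<in>space M. Y \<omega> (real n) \<in> \<nat>" using path by simp
        show "\<forall>k. measure M {\<omega>\<in>space M. Y \<omega> (real n) = real k} = pmf (poisson_pmf (real n)) k"
        proof
          fix k
          have "{\<omega>\<in>space M. Y \<omega> (real n) = real k} = {\<omega>\<in>space M. Y \<omega> (real n) - Y \<omega> 0 = real k}"
            using path by auto
          thus "measure M {\<omega>\<in>space M. Y \<omega> (real n) = real k} = pmf (poisson_pmf (real n)) k"
            using dist[of 0 "real n" k] np by simp
        qed
      qed (use np e in auto)
      also have "exp (- real n * e\<^sup>2 / 4) = exp (- e\<^sup>2 / 4) ^ n"
        by (subst exp_of_nat_mult[symmetric]) (simp add: field_simps)
      finally show ?thesis .
    qed
    have sm: "summable (\<lambda>n. measure M (A n))"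
    proof (rule summable_comparison_test)
      show "\<exists>N. \<forall>n\<ge>N. norm (measure M (A n)) \<le> 2 * exp (- e\<^sup>2 / 4) ^ n" using Ab by auto
      show "summable (\<lambda>n. 2 * exp (- e\<^sup>2 / 4) ^ n)"
        using e by (intro summable_mult summable_geometric) simp
    qed
    have fin: "emeasure M (A n) < \<infinity>" for n by (simp add: less_top[symmetric])
    have "AE \<omega> in M. eventually (\<lambda>n. \<omega> \<in> space M - A n) sequentially"
      by (rule borel_cantelli_AE1[OF Am fin sm])
    moreover have "AE \<omega> in M. \<omega> \<in> space M" by (rule AE_I2)
    ultimately show ?thesis
    proof eventually_elim
      case (elim \<omega>)
      show ?case using elim(1)
      proof (rule eventually_mono)
        fix n assume "\<omega> \<in> space M - A n"
        thus "\<bar>Y \<omega> (real n) - real n\<bar> < e * real n" unfolding A_def using elim(2) by auto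
      qed
    qed
  qed
  have "AE \<omega> in M. \<forall>m::nat. eventually (\<lambda>n::nat. \<bar>Y \<omega> (real n) - real n\<bar> < real n / real (Suc m)) sequentially"
    unfolding AE_all_countable
  proof
    fix m :: nat
    have "AE \<omega> in M. eventually (\<lambda>n::nat. \<bar>Y \<omega> (real n) - real n\<bar> < (1 / real (Suc m)) * real n) sequentially"
      by (rule step) auto
    thus "AE \<omega> in M. eventually (\<lambda>n::nat. \<bar>Y \<omega> (real n) - real n\<bar> < real n / real (Suc m)) sequentially"
      by simp
  qed
  moreover have "AE \<omega> in M. Y \<omega> 0 = 0 \<and> mono_on {0..} (Y \<omega>)" using path by (intro AE_I2) auto
  ultimately show ?thesis
  proof eventually_elim
    case (elim \<omega>)
    show ?case by (rule pois_good_det) (use elim in auto)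
  qed
qed

lemma pois_unif:
  fixes y :: "real \<Rightarrow> real"
  assumes g: "PoisGood y" and c: "0 \<le> c" and e: "0 < \<epsilon>"
  shows "eventually (\<lambda>N::nat. \<forall>l\<in>{0..real N * c}. \<bar>y l - l\<bar> \<le> \<epsilon> * real N) sequentially"
proof -
  have y0: "y 0 = 0" and mono: "mono_on {0..} y" and gg: "\<forall>\<epsilon>>0. \<exists>\<Lambda>\<ge>1. \<forall>l\<ge>\<Lambda>. \<bar>y l - l\<bar> \<le> \<epsilon> * l + 1"
    using g unfolding PoisGood_def by auto
  define e' where "e' = \<epsilon> / (2 * (c + 1))"
  have e'p: "0 < e'" using e c by (simp add: e'_def)
  obtain \<Lambda> where L1: "\<Lambda> \<ge> 1" and L: "\<And>l. l \<ge> \<Lambda> \<Longrightarrow> \<bar>y l - l\<bar> \<le> e' * l + 1"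
    using gg e'p by blast
  have "y 0 \<le> y \<Lambda>" by (rule mono_onD[OF mono]) (use L1 in auto)
  hence yL: "0 \<le> y \<Lambda>" using y0 by simp
  define K0 where "K0 = y \<Lambda> + \<Lambda> + 1"
  have K0: "1 \<le> K0" using yL L1 by (simp add: K0_def)
  obtain N0 :: nat where N0: "2 * K0 / \<epsilon> \<le> real N0" using real_arch_simple by blast
  show ?thesis unfolding eventually_sequentially
  proof (intro exI[of _ N0] allI impI ballI)
    fix N l assume N: "N0 \<le> N" and l: "l \<in> {0..real N * c}"
    have NK: "K0 \<le> \<epsilon> * real N / 2"
    proof -
      have "2 * K0 / \<epsilon> \<le> real N" using N N0 by linarith
      thus ?thesis using e by (simp add: field_simps)
    qed
    show "\<bar>y l - l\<bar> \<le> \<epsilon> * real N"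
    proof (cases "l \<ge> \<Lambda>")
      case True
      have "\<bar>y l - l\<bar> \<le> e' * l + 1" using L True by blast
      also have "e' * l \<le> e' * (real N * c)" using l e'p by (intro mult_left_mono) auto
      also have "e' * (real N * c) \<le> \<epsilon> * real N / 2"
      proof -
        have "e' * c \<le> \<epsilon> / 2" using e c by (simp add: e'_def field_simps)
        hence "(e' * c) * real N \<le> (\<epsilon> / 2) * real N" by (intro mult_right_mono) auto
        thus ?thesis by (simp add: algebra_simps)
      qed
      finally show ?thesis using NK K0 by linarith
    next
      case False
      have l0: "0 \<le> l" using l by simp
      have "y l \<le> y \<Lambda>" by (rule mono_onD[OF mono]) (use False l0 L1 in auto)
      moreover have "y 0 \<le> y l" by (rule mono_onD[OF mono]) (use l0 in auto)
      hence "0 \<le> y l" using y0 by simp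
      ultimately have "\<bar>y l - l\<bar> \<le> K0" using False l0 unfolding K0_def by (simp add: abs_le_iff)
      thus ?thesis using NK e by linarith
    qed
  qed
qed

lemma C1_lipschitz:
  fixes f :: "real ^ 'n \<Rightarrow> real" and D :: "(real ^ 'n) \<Rightarrow> ((real ^ 'n) \<Rightarrow>\<^sub>L real)"
  assumes d: "\<forall>x. (f has_derivative blinfun_apply (D x)) (at x)" and Dc: "continuous_on UNIV D"
    and C: "compact C" "convex C"
  shows "\<exists>L\<ge>0. \<forall>x\<in>C. \<forall>y\<in>C. \<bar>f x - f y\<bar> \<le> L * norm (x - y)"
proof -
  have "compact (D ` C)" using Dc C by (intro compact_continuous_image) (auto intro: continuous_on_subset)
  then obtain Bd where Bd: "\<And>x. x \<in> C \<Longrightarrow> norm (D x) \<le> Bd"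
    using compact_imp_bounded[of "D ` C"] unfolding bounded_iff by auto
  show ?thesis
  proof (intro exI[of _ "max Bd 0"] conjI ballI)
    fix x y assume x: "x \<in> C" and y: "y \<in> C"
    have "norm (f x - f y) \<le> max Bd 0 * norm (x - y)"
    proof (rule differentiable_bound[OF C(2) _ _ x y])
      show "(f has_derivative blinfun_apply (D z)) (at z within C)" if "z \<in> C" for z
        using d has_derivative_at_withinI by blast
      show "onorm (blinfun_apply (D z)) \<le> max Bd 0" if "z \<in> C" for z
        using Bd[OF that] by (simp add: norm_blinfun.rep_eq[symmetric])
    qed
    thus "\<bar>f x - f y\<bar> \<le> max Bd 0 * norm (x - y)" by simp
  qed simp
qed

lemma exp_has_integral:
  fixes lam s :: real assumes "0 < lam" "0 \<le> s"
  shows "((\<lambda>u. exp (lam * u)) has_integral (exp (lam * s) - 1) / lam) {0..s}"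
proof -
  have "((\<lambda>u. exp (lam * u)) has_integral (exp (lam * s) / lam - exp (lam * 0) / lam)) {0..s}"
  proof (rule fundamental_theorem_of_calculus[OF assms(2)])
    fix x :: real
    have "((\<lambda>u. exp (lam * u) / lam) has_real_derivative (exp (lam * x) * lam / lam)) (at x within {0..s})"
      by (auto intro!: derivative_eq_intros)
    thus "((\<lambda>u. exp (lam * u) / lam) has_vector_derivative exp (lam * x)) (at x within {0..s})"
      using assms by (simp add: has_real_derivative_iff_has_vector_derivative)
  qed
  moreover have "exp (lam * s) / lam - exp (lam * 0) / lam = (exp (lam * s) - 1) / lam"
    by (metis diff_divide_distrib exp_zero mult_zero_right)
  ultimately show ?thesis by (simp only:)
qed

lemma det_N:
  fixes \<nu> :: "'m::finite \<Rightarrow> real ^ 'n" and a :: "'m \<Rightarrow> real ^ 'n \<Rightarrow> real"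
    and y f :: "'m \<Rightarrow> real \<Rightarrow> real" and z X :: "real \<Rightarrow> real ^ 'n" and x0 :: "real ^ 'n"
    and n B L R \<eta> t :: real and j :: 'm
  assumes n: "0 < n" and t: "0 < t" and B: "0 \<le> B" and L: "0 \<le> L" and \<eta>: "0 \<le> \<eta>"
    and f_int: "\<forall>k. \<forall>s\<in>{0..t}. f k integrable_on {0..s}"
    and aX_int: "\<forall>k. \<forall>s\<in>{0..t}. (\<lambda>u. a k (X u)) integrable_on {0..s}"
    and z_eq: "\<forall>s\<in>{0..t}. z s = x0 + (\<Sum>k\<in>UNIV. (y k (integral {0..s} (f k)) / n) *\<^sub>R \<nu> k)"
    and X_eq: "\<forall>s\<in>{0..t}. X s = x0 + (\<Sum>k\<in>UNIV. integral {0..s} (\<lambda>u. a k (X u)) *\<^sub>R \<nu> k)"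
    and z_R: "\<forall>u\<in>{0..t}. norm (z u) \<le> R" and X_R: "\<forall>u\<in>{0..t}. norm (X u) \<le> R"
    and fB: "\<forall>k. \<forall>u\<in>{0..t}. \<bar>f k u / n - a k (z u)\<bar> \<le> B / n"
    and lip: "\<forall>k. \<forall>u\<in>{0..t}. \<bar>a k (z u) - a k (X u)\<bar> \<le> L * norm (z u - X u)"
    and y\<eta>: "\<forall>k. \<forall>s\<in>{0..t}. \<bar>y k (integral {0..s} (f k)) - integral {0..s} (f k)\<bar> \<le> \<eta> * n"
  shows "\<forall>s\<in>{0..t}. \<bar>y j (integral {0..s} (f j)) / n - integral {0..s} (\<lambda>u. a j (X u))\<bar>
     \<le> (1 + 2 * (\<Sum>k\<in>UNIV. norm (\<nu> k)) * L * exp ((2 * (\<Sum>k\<in>UNIV. norm (\<nu> k)) * L + 1) * t)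
             / (2 * (\<Sum>k\<in>UNIV. norm (\<nu> k)) * L + 1)) * (\<eta> + t * B / n)"
proof -
  define V where "V = (\<Sum>k\<in>UNIV. norm (\<nu> k))"
  define lam where "lam = 2 * V * L + 1"
  have V0: "0 \<le> V" unfolding V_def by (simp add: sum_nonneg)
  have VL: "0 \<le> V * L" using V0 L by simp
  have "2 * V * L = 2 * (V * L)" by simp
  hence lam1: "1 \<le> lam" and lam0: "0 < lam" using VL unfolding lam_def by linarith+
  define D where "D u = norm (z u - X u)" for u
  define T where "T k s = y k (integral {0..s} (f k)) / n - integral {0..s} (\<lambda>u. a k (X u))" for k s
  define \<phi> where "\<phi> = (SUP u\<in>{0..t}. exp (- lam * u) * D u)"
  have D0: "0 \<le> D u" for u unfolding D_def by simp
  have Dle: "exp (- lam * u) * D u \<le> 2 * R" if u: "u \<in> {0..t}" for u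
  proof -
    have "D u \<le> norm (z u) + norm (X u)" unfolding D_def by (rule norm_triangle_ineq4)
    also have "\<dots> \<le> 2 * R"
    proof -
      have "norm (z u) \<le> R" "norm (X u) \<le> R" using z_R X_R u by blast+
      thus ?thesis by linarith
    qed
    finally have "D u \<le> 2 * R" .
    moreover have "exp (- lam * u) \<le> 1" using u lam0 by simp
    ultimately show ?thesis using D0[of u] by (smt (verit) exp_gt_zero mult_left_le_one_le)
  qed
  have bdd: "bdd_above ((\<lambda>u. exp (- lam * u) * D u) ` {0..t})"
    using Dle by (intro bdd_aboveI2) auto
  have \<phi>_ge: "exp (- lam * u) * D u \<le> \<phi>" if "u \<in> {0..t}" for u
    unfolding \<phi>_def using bdd that by (rule cSUP_upper2) simp
  have \<phi>0: "0 \<le> \<phi>" using \<phi>_ge[of 0] t D0[of 0] by simp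
  have D\<phi>: "D u \<le> exp (lam * u) * \<phi>" if "u \<in> {0..t}" for u
  proof -
    have "D u = exp (lam * u) * (exp (- lam * u) * D u)" by (simp add: exp_minus field_simps)
    also have "\<dots> \<le> exp (lam * u) * \<phi>" using \<phi>_ge[OF that] by (intro mult_left_mono) auto
    finally show ?thesis .
  qed
  have Tb: "\<bar>T k s\<bar> \<le> \<eta> + s * B / n + L * \<phi> * ((exp (lam * s) - 1) / lam)" if s: "s \<in> {0..t}" for k s
  proof -
    have s0: "0 \<le> s" using s by simp
    have sub: "{0..s} \<subseteq> {0..t}" using s by auto
    have fi: "f k integrable_on {0..s}" using f_int s by blast
    have ai: "(\<lambda>u. a k (X u)) integrable_on {0..s}" using aX_int s by blast
    define g where "g u = B / n + L * \<phi> * exp (lam * u)" for u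
    have gi: "(g has_integral (s * B / n + L * \<phi> * ((exp (lam * s) - 1) / lam))) {0..s}"
    proof -
      have "((\<lambda>u. B / n) has_integral (s * B / n)) {0..s}" using has_integral_const_real[of "B / n" 0 s] s0 by simp
      moreover have "((\<lambda>u. L * \<phi> * exp (lam * u)) has_integral (L * \<phi> * ((exp (lam * s) - 1) / lam))) {0..s}"
        by (rule has_integral_mult_right[OF exp_has_integral[OF lam0 s0]])
      ultimately show ?thesis unfolding g_def by (rule has_integral_add)
    qed
    have pw: "norm (f k u / n - a k (X u)) \<le> g u" if u: "u \<in> {0..s}" for u
    proof -
      have ut: "u \<in> {0..t}" using u sub by auto
      have "\<bar>f k u / n - a k (X u)\<bar> \<le> \<bar>f k u / n - a k (z u)\<bar> + \<bar>a k (z u) - a k (X u)\<bar>" by linarith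
      also have "\<dots> \<le> B / n + L * D u" using fB lip ut unfolding D_def by (meson add_mono)
      also have "L * D u \<le> L * (exp (lam * u) * \<phi>)" using D\<phi>[OF ut] L by (intro mult_left_mono)
      finally show ?thesis unfolding g_def by (simp add: algebra_simps)
    qed
    have fdi: "((\<lambda>u. f k u / n) has_integral (integral {0..s} (f k) / n)) {0..s}"
      by (rule has_integral_divide[OF integrable_integral[OF fi]])
    have di: "((\<lambda>u. f k u / n - a k (X u)) has_integral (integral {0..s} (f k) / n - integral {0..s} (\<lambda>u. a k (X u)))) {0..s}"
      by (rule has_integral_diff[OF fdi integrable_integral[OF ai]])
    have "norm (integral {0..s} (\<lambda>u. f k u / n - a k (X u))) \<le> integral {0..s} g"
      by (rule integral_norm_bound_integral) (use di gi pw in auto)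
    hence I: "\<bar>integral {0..s} (f k) / n - integral {0..s} (\<lambda>u. a k (X u))\<bar> \<le> s * B / n + L * \<phi> * ((exp (lam * s) - 1) / lam)"
      using integral_unique[OF di] integral_unique[OF gi] by simp
    have Y: "\<bar>y k (integral {0..s} (f k)) / n - integral {0..s} (f k) / n\<bar> \<le> \<eta>"
    proof -
      have "\<bar>y k (integral {0..s} (f k)) / n - integral {0..s} (f k) / n\<bar> = \<bar>y k (integral {0..s} (f k)) - integral {0..s} (f k)\<bar> / n"
        using n by (simp add: diff_divide_distrib[symmetric])
      also have "\<dots> \<le> \<eta> * n / n" using y\<eta> s n by (intro divide_right_mono) auto
      finally show ?thesis using n by simp
    qed
    show ?thesis unfolding T_def using I Y by linarith
  qed
  have zX: "z s - X s = (\<Sum>k\<in>UNIV. T k s *\<^sub>R \<nu> k)" if s: "s \<in> {0..t}" for s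
    using z_eq X_eq s unfolding T_def by (simp add: sum_subtractf[symmetric] scaleR_diff_left)
  have Db: "D s \<le> V * (\<eta> + s * B / n + L * \<phi> * ((exp (lam * s) - 1) / lam))" if s: "s \<in> {0..t}" for s
  proof -
    have "D s \<le> (\<Sum>k\<in>UNIV. norm (T k s *\<^sub>R \<nu> k))" unfolding D_def zX[OF s] by (rule norm_sum)
    also have "\<dots> \<le> (\<Sum>k\<in>UNIV. (\<eta> + s * B / n + L * \<phi> * ((exp (lam * s) - 1) / lam)) * norm (\<nu> k))"
    proof (rule sum_mono)
      fix k
      have "norm (T k s *\<^sub>R \<nu> k) = \<bar>T k s\<bar> * norm (\<nu> k)" by simp
      also have "\<dots> \<le> (\<eta> + s * B / n + L * \<phi> * ((exp (lam * s) - 1) / lam)) * norm (\<nu> k)"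
        by (rule mult_right_mono[OF Tb[OF s] norm_ge_zero])
      finally show "norm (T k s *\<^sub>R \<nu> k) \<le> (\<eta> + s * B / n + L * \<phi> * ((exp (lam * s) - 1) / lam)) * norm (\<nu> k)" .
    qed
    also have "\<dots> = (\<eta> + s * B / n + L * \<phi> * ((exp (lam * s) - 1) / lam)) * V"
      unfolding V_def by (rule sum_distrib_left[symmetric])
    also have "\<dots> = V * (\<eta> + s * B / n + L * \<phi> * ((exp (lam * s) - 1) / lam))"
      by (rule mult.commute)
    finally show ?thesis .
  qed
  have wb: "exp (- lam * s) * D s \<le> V * (\<eta> + t * B / n) + V * L * \<phi> / lam" if s: "s \<in> {0..t}" for s
  proof -
    have s0: "0 \<le> s" "s \<le> t" using s by auto
    define E where "E = exp (- lam * s)"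
    have E: "0 < E" "E \<le> 1" using s0 lam0 by (auto simp: E_def)
    have EE: "E * exp (lam * s) = 1" by (simp add: E_def exp_minus field_simps)
    have p1: "\<eta> + s * B / n \<le> \<eta> + t * B / n" using s0 B n by (simp add: divide_right_mono mult_right_mono)
    have p0: "0 \<le> \<eta> + s * B / n" using \<eta> s0 B n by simp
    have "E * D s \<le> E * (V * (\<eta> + s * B / n + L * \<phi> * ((exp (lam * s) - 1) / lam)))"
      using Db[OF s] E by (intro mult_left_mono) auto
    also have "\<dots> = V * (E * (\<eta> + s * B / n)) + V * L * \<phi> * ((E * exp (lam * s) - E) / lam)"
      by (simp add: algebra_simps)
    also have "\<dots> = V * (E * (\<eta> + s * B / n)) + V * L * \<phi> * ((1 - E) / lam)" by (simp only: EE)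
    also have "\<dots> \<le> V * (\<eta> + t * B / n) + V * L * \<phi> * (1 / lam)"
    proof (rule add_mono)
      have "E * (\<eta> + s * B / n) \<le> 1 * (\<eta> + t * B / n)" using E p0 p1 by (intro mult_mono) auto
      thus "V * (E * (\<eta> + s * B / n)) \<le> V * (\<eta> + t * B / n)" using V0 by (simp add: mult_left_mono)
      have "(1 - E) / lam \<le> 1 / lam" using E lam0 by (simp add: divide_right_mono)
      moreover have "0 \<le> V * L * \<phi>" using V0 L \<phi>0 by simp
      ultimately show "V * L * \<phi> * ((1 - E) / lam) \<le> V * L * \<phi> * (1 / lam)" by (rule mult_left_mono)
    qed
    finally show ?thesis by (simp add: E_def)
  qed
  have \<phi>b: "\<phi> \<le> V * (\<eta> + t * B / n) + V * L * \<phi> / lam"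
  proof (subst (1) \<phi>_def, rule cSUP_least)
    show "{0..t} \<noteq> {}" using t by simp
    fix u assume "u \<in> {0..t}"
    thus "exp (- lam * u) * D u \<le> V * (\<eta> + t * B / n) + V * L * \<phi> / lam" by (rule wb)
  qed
  have half: "V * L * \<phi> / lam \<le> \<phi> / 2"
  proof -
    have "2 * (V * L) \<le> lam" unfolding lam_def by simp
    hence "2 * (V * L) * \<phi> \<le> lam * \<phi>" using \<phi>0 by (rule mult_right_mono)
    thus ?thesis using lam0 by (simp add: field_simps)
  qed
  have \<phi>2: "\<phi> \<le> 2 * V * (\<eta> + t * B / n)" using \<phi>b half by linarith
  show ?thesis
  proof
    fix s assume s: "s \<in> {0..t}"
    have s0: "0 \<le> s" "s \<le> t" using s by auto
    have "\<bar>T j s\<bar> \<le> \<eta> + s * B / n + L * \<phi> * ((exp (lam * s) - 1) / lam)" by (rule Tb[OF s])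
    also have "\<dots> \<le> (\<eta> + t * B / n) + (L * exp (lam * t) / lam) * \<phi>"
    proof (rule add_mono)
      show "\<eta> + s * B / n \<le> \<eta> + t * B / n" using s0 B n by (simp add: divide_right_mono mult_right_mono)
      have "lam * s \<le> lam * t" using s0 lam0 by (intro mult_left_mono) auto
      hence "exp (lam * s) \<le> exp (lam * t)" by (simp only: exp_le_cancel_iff)
      hence "exp (lam * s) - 1 \<le> exp (lam * t)" by linarith
      hence "(exp (lam * s) - 1) / lam \<le> exp (lam * t) / lam"
        using lam0 by (intro divide_right_mono) auto
      hence "L * \<phi> * ((exp (lam * s) - 1) / lam) \<le> L * \<phi> * (exp (lam * t) / lam)"
        using L \<phi>0 by (intro mult_left_mono) auto
      thus "L * \<phi> * ((exp (lam * s) - 1) / lam) \<le> (L * exp (lam * t) / lam) * \<phi>" by (simp add: algebra_simps)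
    qed
    also have "\<dots> \<le> (\<eta> + t * B / n) + (L * exp (lam * t) / lam) * (2 * V * (\<eta> + t * B / n))"
      using \<phi>2 L lam0 by (intro add_left_mono mult_left_mono) auto
    also have "\<dots> = (1 + 2 * V * L * exp (lam * t) / lam) * (\<eta> + t * B / n)"
      using lam0 n by (simp add: field_simps)
    finally show "\<bar>y j (integral {0..s} (f j)) / n - integral {0..s} (\<lambda>u. a j (X u))\<bar>
     \<le> (1 + 2 * (\<Sum>k\<in>UNIV. norm (\<nu> k)) * L * exp ((2 * (\<Sum>k\<in>UNIV. norm (\<nu> k)) * L + 1) * t)
             / (2 * (\<Sum>k\<in>UNIV. norm (\<nu> k)) * L + 1)) * (\<eta> + t * B / n)"
      unfolding T_def lam_def V_def .
  qed
qed

lemma Zplus_Rplus: "x \<in> Zplus \<Longrightarrow> x \<in> Rplus"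
proof -
  assume "x \<in> Zplus"
  hence "\<forall>i. x $ i \<in> \<nat>" unfolding Zplus_def by simp
  hence "\<forall>i. 0 \<le> x $ i" by (metis Nats_cases of_nat_0_le_iff)
  thus "x \<in> Rplus" unfolding Rplus_def by simp
qed

lemma closed_Rplus: "closed (Rplus :: (real ^ 'n) set)"
  unfolding Rplus_def by (intro closed_Collect_all closed_Collect_le continuous_intros)

lemma det_main:
  fixes \<nu> :: "'m::finite \<Rightarrow> real ^ 'n"
    and aN :: "nat \<Rightarrow> 'm \<Rightarrow> real ^ 'n \<Rightarrow> real"
    and a :: "'m \<Rightarrow> real ^ 'n \<Rightarrow> real"
    and x0 :: "real ^ 'n"
    and y :: "'m \<Rightarrow> real \<Rightarrow> real"
    and xN :: "nat \<Rightarrow> real \<Rightarrow> real ^ 'n"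
    and X :: "real \<Rightarrow> real ^ 'n"
    and j :: 'm and t \<Gamma> :: real and S :: "nat set"
  assumes aN_nonneg: "\<forall>N k x. x \<in> Zplus \<longrightarrow> 0 \<le> aN N k x"
    and a_rate: "\<forall>K. compact K \<and> K \<subseteq> Rplus \<longrightarrow>
        (\<exists>B>0. \<forall>x\<in>K. \<forall>N\<ge>1. \<forall>k. \<bar>aN N k (real N *\<^sub>R x) / real N - a k x\<bar> \<le> B / real N)"
    and a_C1: "\<forall>k. \<exists>D :: (real ^ 'n) \<Rightarrow> ((real ^ 'n) \<Rightarrow>\<^sub>L real).
        (\<forall>x. (a k has_derivative blinfun_apply (D x)) (at x)) \<and> continuous_on UNIV D"
    and y_good: "\<forall>k. PoisGood (y k)"
    and S1: "\<forall>N\<in>S. 1 \<le> N"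
    and st: "\<forall>N\<in>S. \<forall>s\<ge>0. xN N s \<in> Zplus"
    and eq: "\<forall>N\<in>S. \<forall>s\<ge>0. (\<forall>k. (\<lambda>u. aN N k (xN N u)) integrable_on {0..s}) \<and>
           xN N s = real N *\<^sub>R x0 + (\<Sum>k\<in>UNIV. y k (integral {0..s} (\<lambda>u. aN N k (xN N u))) *\<^sub>R \<nu> k)"
    and bdd: "\<forall>N\<in>S. \<forall>s\<ge>0. norm (xN N s /\<^sub>R real N) \<le> \<Gamma>"
    and X_cont: "continuous_on {0..} X"
    and X_eq: "\<forall>s\<ge>0. X s = x0 + (\<Sum>k\<in>UNIV. integral {0..s} (\<lambda>u. a k (X u)) *\<^sub>R \<nu> k)"
    and t_pos: "t > 0"
  shows "filterlim (\<lambda>N. SUP s\<in>{0..t}.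
        \<bar>y j (integral {0..s} (\<lambda>u. aN N j (xN N u))) / real N
          - integral {0..s} (\<lambda>u. a j (X u))\<bar>) (nhds 0) (inf sequentially (principal S))"
proof -
  define \<Gamma>0 where "\<Gamma>0 = max \<Gamma> 0"
  define K :: "(real ^ 'n) set" where "K = cball 0 \<Gamma>0 \<inter> Rplus"
  have Kc: "compact K" unfolding K_def by (intro compact_Int_closed compact_cball closed_Rplus)
  obtain B where B0: "B > 0" and Bb: "\<And>x N k. x \<in> K \<Longrightarrow> N \<ge> 1 \<Longrightarrow> \<bar>aN N k (real N *\<^sub>R x) / real N - a k x\<bar> \<le> B / real N"
  proof -
    have "K \<subseteq> Rplus" unfolding K_def by (rule Int_lower2)
    hence "\<exists>B>0. \<forall>x\<in>K. \<forall>N\<ge>1. \<forall>k. \<bar>aN N k (real N *\<^sub>R x) / real N - a k x\<bar> \<le> B / real N"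
      using a_rate Kc by simp
    thus ?thesis using that by blast
  qed
  have cont_a: "continuous_on UNIV (a k)" for k
  proof -
    obtain D :: "(real ^ 'n) \<Rightarrow> ((real ^ 'n) \<Rightarrow>\<^sub>L real)" where "\<forall>x. (a k has_derivative blinfun_apply (D x)) (at x)"
      using a_C1 by blast
    thus ?thesis by (metis continuous_at_imp_continuous_on has_derivative_continuous)
  qed
  have "\<forall>k. \<exists>A. \<forall>x\<in>K. \<bar>a k x\<bar> \<le> A"
  proof
    fix k
    have "compact (a k ` K)" using Kc cont_a by (intro compact_continuous_image) (auto intro: continuous_on_subset)
    then obtain A where "\<forall>v\<in>a k ` K. norm v \<le> A" using compact_imp_bounded bounded_iff by metis
    thus "\<exists>A. \<forall>x\<in>K. \<bar>a k x\<bar> \<le> A" by auto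
  qed
  then obtain Af where Af: "\<And>k x. x \<in> K \<Longrightarrow> \<bar>a k x\<bar> \<le> Af k" by metis
  define A0 where "A0 = (\<Sum>k\<in>UNIV. \<bar>Af k\<bar>)"
  have A0: "\<bar>a k x\<bar> \<le> A0" if "x \<in> K" for k x
  proof -
    have "\<bar>Af k\<bar> \<le> A0" unfolding A0_def by (rule member_le_sum) auto
    thus ?thesis using Af[OF that, of k] by linarith
  qed
  have A0p: "0 \<le> A0" unfolding A0_def by (simp add: sum_nonneg)
  have "compact (X ` {0..t})" using X_cont by (intro compact_continuous_image) (auto intro: continuous_on_subset)
  then obtain RX where RX: "\<And>s. s \<in> {0..t} \<Longrightarrow> norm (X s) \<le> RX"
    using compact_imp_bounded bounded_iff by (metis image_eqI)
  define R where "R = \<Gamma>0 + \<bar>RX\<bar>"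
  define C :: "(real ^ 'n) set" where "C = cball 0 R"
  have "\<forall>k. \<exists>L\<ge>0. \<forall>x\<in>C. \<forall>y\<in>C. \<bar>a k x - a k y\<bar> \<le> L * norm (x - y)"
  proof
    fix k
    obtain D :: "(real ^ 'n) \<Rightarrow> ((real ^ 'n) \<Rightarrow>\<^sub>L real)" where
      "\<forall>x. (a k has_derivative blinfun_apply (D x)) (at x)" "continuous_on UNIV D"
      using a_C1 by blast
    thus "\<exists>L\<ge>0. \<forall>x\<in>C. \<forall>y\<in>C. \<bar>a k x - a k y\<bar> \<le> L * norm (x - y)"
      unfolding C_def by (intro C1_lipschitz) auto
  qed
  then obtain Lf where Lf0: "\<And>k. 0 \<le> Lf k" and Lf: "\<And>k x y. x \<in> C \<Longrightarrow> y \<in> C \<Longrightarrow> \<bar>a k x - a k y\<bar> \<le> Lf k * norm (x - y)"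
    by metis
  define L where "L = (\<Sum>k\<in>UNIV. Lf k)"
  have L0: "0 \<le> L" unfolding L_def by (simp add: sum_nonneg Lf0)
  have LL: "\<bar>a k x - a k y\<bar> \<le> L * norm (x - y)" if "x \<in> C" "y \<in> C" for k x y
  proof -
    have "Lf k \<le> L" unfolding L_def by (rule member_le_sum) (auto simp: Lf0)
    hence "Lf k * norm (x - y) \<le> L * norm (x - y)" by (intro mult_right_mono) auto
    thus ?thesis using Lf[OF that, of k] by linarith
  qed
  define Q where "Q = (1 + 2 * (\<Sum>k\<in>UNIV. norm (\<nu> k)) * L * exp ((2 * (\<Sum>k\<in>UNIV. norm (\<nu> k)) * L + 1) * t)
             / (2 * (\<Sum>k\<in>UNIV. norm (\<nu> k)) * L + 1))"
  have V0: "0 \<le> (\<Sum>k\<in>UNIV. norm (\<nu> k))" by (simp add: sum_nonneg)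
  have VL: "0 \<le> 2 * (\<Sum>k\<in>UNIV. norm (\<nu> k)) * L" using V0 L0 by simp
  have "0 \<le> 2 * (\<Sum>k\<in>UNIV. norm (\<nu> k)) * L * exp ((2 * (\<Sum>k\<in>UNIV. norm (\<nu> k)) * L + 1) * t)
             / (2 * (\<Sum>k\<in>UNIV. norm (\<nu> k)) * L + 1)"
    using VL V0 L0 by (intro divide_nonneg_nonneg mult_nonneg_nonneg) auto
  hence Q1: "1 \<le> Q" unfolding Q_def by linarith
  show ?thesis
  proof (rule tendstoI)
    fix \<epsilon> :: real assume e: "0 < \<epsilon>"
    define \<eta> where "\<eta> = \<epsilon> / (4 * Q)"
    have \<eta>0: "0 < \<eta>" using e Q1 by (simp add: \<eta>_def)
    have ev1: "eventually (\<lambda>N::nat. \<forall>k. \<forall>l\<in>{0..real N * ((A0 + B) * t)}. \<bar>y k l - l\<bar> \<le> \<eta> * real N) sequentially"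
    proof (rule eventually_all_finite)
      fix k
      show "eventually (\<lambda>N::nat. \<forall>l\<in>{0..real N * ((A0 + B) * t)}. \<bar>y k l - l\<bar> \<le> \<eta> * real N) sequentially"
        using y_good A0p B0 t_pos \<eta>0 by (intro pois_unif) auto
    qed
    obtain N1 :: nat where N1: "4 * Q * t * B / \<epsilon> \<le> real N1" using real_arch_simple by blast
    have ev2: "eventually (\<lambda>N::nat. N \<ge> max N1 1) sequentially" by (rule eventually_ge_at_top)
    show "eventually (\<lambda>N. dist (SUP s\<in>{0..t}.
        \<bar>y j (integral {0..s} (\<lambda>u. aN N j (xN N u))) / real N
          - integral {0..s} (\<lambda>u. a j (X u))\<bar>) 0 < \<epsilon>) (inf sequentially (principal S))"
      unfolding eventually_inf_principal
      using ev1 ev2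
    proof eventually_elim
      case (elim N)
      show ?case
      proof
        assume NS: "N \<in> S"
        have N1': "1 \<le> N" using S1 NS by blast
        have np: "0 < real N" using N1' by simp
        define f where "f k u = aN N k (xN N u)" for k u
        define z where "z u = xN N u /\<^sub>R real N" for u
        have zscale: "real N *\<^sub>R z u = xN N u" for u using np by (simp add: z_def)
        have zK: "z u \<in> K" if "u \<ge> 0" for u
        proof -
          have "norm (z u) \<le> \<Gamma>0" using bdd NS that unfolding z_def \<Gamma>0_def by (meson max.coboundedI1)
          moreover have "z u \<in> Rplus"
          proof -
            have "xN N u \<in> Rplus" using st NS that Zplus_Rplus by blast
            thus ?thesis using np unfolding z_def Rplus_def by auto
          qed
          ultimately show ?thesis unfolding K_def by auto
        qed
        have zR: "norm (z u) \<le> R" if "u \<ge> 0" for u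
          using zK[OF that] unfolding K_def R_def by auto
        have XR: "norm (X u) \<le> R" if "u \<in> {0..t}" for u
          using RX[OF that] unfolding R_def \<Gamma>0_def by linarith
        have fB: "\<bar>f k u / real N - a k (z u)\<bar> \<le> B / real N" if "u \<ge> 0" for k u
          using Bb[OF zK[OF that] N1', of k] unfolding f_def zscale .
        have f0: "0 \<le> f k u" if "u \<ge> 0" for k u
          unfolding f_def using aN_nonneg st NS that by blast
        have fle: "f k u \<le> real N * (A0 + B)" if "u \<ge> 0" for k u
        proof -
          have "f k u / real N \<le> A0 + B / real N" using fB[OF that, of k] A0[OF zK[OF that], of k] by linarith
          also have "B / real N \<le> B" using N1' B0 by (simp add: divide_le_eq)
          finally have "f k u / real N \<le> A0 + B" by simp
          thus ?thesis using np by (simp add: divide_le_eq mult.commute)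
        qed
        have bound: "\<forall>s\<in>{0..t}. \<bar>y j (integral {0..s} (f j)) / real N - integral {0..s} (\<lambda>u. a j (X u))\<bar>
             \<le> Q * (\<eta> + t * B / real N)"
          unfolding Q_def
        proof (rule det_N[where z = z and R = R])
          show "0 < real N" by (rule np)
          show "0 < t" by (rule t_pos)
          show "0 \<le> B" using B0 by simp
          show "0 \<le> L" by (rule L0)
          show "0 \<le> \<eta>" using \<eta>0 by simp
          show "\<forall>k. \<forall>s\<in>{0..t}. f k integrable_on {0..s}"
            using eq NS unfolding f_def by (auto simp del: atLeastAtMost_iff) (meson atLeastAtMost_iff)
          show "\<forall>k. \<forall>s\<in>{0..t}. (\<lambda>u. a k (X u)) integrable_on {0..s}"
          proof (intro allI ballI integrable_continuous_real)
            fix k s assume "s \<in> {0..t}"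
            show "continuous_on {0..s} (\<lambda>u. a k (X u))"
              using X_cont cont_a by (intro continuous_on_compose2[of UNIV "a k" "{0..s}" X]) (auto intro: continuous_on_subset)
          qed
          show "\<forall>s\<in>{0..t}. z s = x0 + (\<Sum>k\<in>UNIV. (y k (integral {0..s} (f k)) / real N) *\<^sub>R \<nu> k)"
          proof
            fix s assume "s \<in> {0..t}"
            hence "xN N s = real N *\<^sub>R x0 + (\<Sum>k\<in>UNIV. y k (integral {0..s} (f k)) *\<^sub>R \<nu> k)"
              using eq NS unfolding f_def by auto
            thus "z s = x0 + (\<Sum>k\<in>UNIV. (y k (integral {0..s} (f k)) / real N) *\<^sub>R \<nu> k)"
              unfolding z_def using np by (simp add: scaleR_add_right scaleR_sum_right divide_inverse mult.commute)
          qed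
          show "\<forall>s\<in>{0..t}. X s = x0 + (\<Sum>k\<in>UNIV. integral {0..s} (\<lambda>u. a k (X u)) *\<^sub>R \<nu> k)"
            using X_eq by auto
          show "\<forall>u\<in>{0..t}. norm (z u) \<le> R" using zR by auto
          show "\<forall>u\<in>{0..t}. norm (X u) \<le> R" using XR by auto
          show "\<forall>k. \<forall>u\<in>{0..t}. \<bar>f k u / real N - a k (z u)\<bar> \<le> B / real N" using fB by auto
          show "\<forall>k. \<forall>u\<in>{0..t}. \<bar>a k (z u) - a k (X u)\<bar> \<le> L * norm (z u - X u)"
            using LL zR XR unfolding C_def by auto
          show "\<forall>k. \<forall>s\<in>{0..t}. \<bar>y k (integral {0..s} (f k)) - integral {0..s} (f k)\<bar> \<le> \<eta> * real N"
          proof (intro allI ballI)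
            fix k s assume s: "s \<in> {0..t}"
            have fi: "f k integrable_on {0..s}" using eq NS s unfolding f_def by auto
            have I0: "0 \<le> integral {0..s} (f k)" using fi f0 by (intro integral_nonneg) auto
            have "integral {0..s} (f k) \<le> integral {0..s} (\<lambda>u. real N * (A0 + B))"
              using fi fle by (intro integral_le) auto
            also have "\<dots> = s * (real N * (A0 + B))"
              using has_integral_const_real[of "real N * (A0 + B)" 0 s] s by (simp add: integral_unique)
            also have "\<dots> \<le> t * (real N * (A0 + B))"
              using s np A0p B0 by (intro mult_right_mono) auto
            also have "\<dots> = real N * ((A0 + B) * t)" by (simp add: algebra_simps)
            finally have "integral {0..s} (f k) \<in> {0..real N * ((A0 + B) * t)}" using I0 by simp
            thus "\<bar>y k (integral {0..s} (f k)) - integral {0..s} (f k)\<bar> \<le> \<eta> * real N"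
              using elim(1) by blast
          qed
        qed
        have tb: "t * B / real N \<le> \<eta>"
        proof -
          have "real N1 \<le> real N" using elim(2) by simp
          hence "4 * Q * t * B / \<epsilon> \<le> real N" using N1 by linarith
          hence "4 * Q * t * B \<le> \<epsilon> * real N" using e by (simp add: divide_le_eq mult.commute)
          thus ?thesis unfolding \<eta>_def using Q1 np e by (simp add: field_simps)
        qed
        have Qb: "Q * (\<eta> + t * B / real N) \<le> \<epsilon> / 2"
        proof -
          have "Q * (\<eta> + t * B / real N) \<le> Q * (2 * \<eta>)" using tb Q1 by (intro mult_left_mono) auto
          also have "\<dots> = \<epsilon> / 2" unfolding \<eta>_def using Q1 by (simp add: field_simps)
          finally show ?thesis .
        qed
        have bound': "\<bar>y j (integral {0..s} (\<lambda>u. aN N j (xN N u))) / real N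
          - integral {0..s} (\<lambda>u. a j (X u))\<bar> \<le> \<epsilon> / 2" if s: "s \<in> {0..t}" for s
        proof -
          have "\<bar>y j (integral {0..s} (\<lambda>u. aN N j (xN N u))) / real N
            - integral {0..s} (\<lambda>u. a j (X u))\<bar> \<le> Q * (\<eta> + t * B / real N)"
            using bound s unfolding f_def by blast
          thus ?thesis using Qb by linarith
        qed
        have sup_le: "(SUP s\<in>{0..t}. \<bar>y j (integral {0..s} (\<lambda>u. aN N j (xN N u))) / real N
          - integral {0..s} (\<lambda>u. a j (X u))\<bar>) \<le> \<epsilon> / 2"
          using t_pos bound' by (intro cSUP_least) auto
        have sup_ge: "0 \<le> (SUP s\<in>{0..t}. \<bar>y j (integral {0..s} (\<lambda>u. aN N j (xN N u))) / real N
          - integral {0..s} (\<lambda>u. a j (X u))\<bar>)"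
        proof (rule order.trans[OF _ cSUP_upper[of 0]])
          show "0 \<in> {0..t}" using t_pos by simp
          show "bdd_above ((\<lambda>s. \<bar>y j (integral {0..s} (\<lambda>u. aN N j (xN N u))) / real N
            - integral {0..s} (\<lambda>u. a j (X u))\<bar>) ` {0..t})"
            using bound' by (intro bdd_aboveI2[where M = "\<epsilon>/2"]) auto
        qed simp
        show "dist (SUP s\<in>{0..t}. \<bar>y j (integral {0..s} (\<lambda>u. aN N j (xN N u))) / real N
          - integral {0..s} (\<lambda>u. a j (X u))\<bar>) 0 < \<epsilon>"
          using sup_le sup_ge e by simp
      qed
    qed
  qed
qed

theorem lemma3p3:
  fixes M :: "'w measure"
    and \<nu> :: "'m::finite \<Rightarrow> real ^ 'n"
    and c :: "'m \<Rightarrow> real"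
    and aN bN :: "nat \<Rightarrow> 'm \<Rightarrow> real ^ 'n \<Rightarrow> real"
    and a :: "'m \<Rightarrow> real ^ 'n \<Rightarrow> real"
    and x0 :: "real ^ 'n"
    and Y :: "'m \<Rightarrow> 'w \<Rightarrow> real \<Rightarrow> real"
    and XN :: "nat \<Rightarrow> 'w \<Rightarrow> real \<Rightarrow> real ^ 'n"
    and X :: "real \<Rightarrow> real ^ 'n"
    and j :: 'm and t :: real
  assumes nu_int: "\<forall>k i. \<nu> k $ i \<in> \<int>"
    and c_pos: "\<forall>k. c k > 0"
    and aN_def: "\<forall>N k x. aN N k x = c k * bN N k x"
    and bN_nonneg: "\<forall>N k. \<forall>x\<in>Zplus. bN N k x \<ge> 0"
    and a_lim: "\<forall>k. \<forall>x\<in>Rplus. (\<lambda>N. aN N k (real N *\<^sub>R x) / real N) \<longlonglongrightarrow> a k x"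
    and a_rate: "\<forall>K. compact K \<and> K \<subseteq> Rplus \<longrightarrow>
        (\<exists>B>0. \<forall>x\<in>K. \<forall>N\<ge>1. \<forall>k. \<bar>aN N k (real N *\<^sub>R x) / real N - a k x\<bar> \<le> B / real N)"
    and a_C1: "\<forall>k. \<exists>D :: (real ^ 'n) \<Rightarrow> ((real ^ 'n) \<Rightarrow>\<^sub>L real).
        (\<forall>x. (a k has_derivative blinfun_apply (D x)) (at x)) \<and> continuous_on UNIV D"
    and x0_pos: "x0 \<in> Rplus"
    and M_prob: "prob_space M"
    and Y_poisson: "\<forall>k. unit_poisson_process M (Y k)"
    and Y_indep: "prob_space.indep_vars M (\<lambda>_. Pi\<^sub>M {0..} (\<lambda>_. borel))
        (\<lambda>k \<omega>. restrict (Y k \<omega>) {0..}) UNIV"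
    and XN_state: "\<forall>N. N \<ge> 1 \<and> real N *\<^sub>R x0 \<in> Zplus \<longrightarrow>
        (AE \<omega> in M. \<forall>s\<ge>0. XN N \<omega> s \<in> Zplus)"
    and XN_eq: "\<forall>N. N \<ge> 1 \<and> real N *\<^sub>R x0 \<in> Zplus \<longrightarrow>
        (AE \<omega> in M. \<forall>s\<ge>0. (\<forall>k. (\<lambda>u. aN N k (XN N \<omega> u)) integrable_on {0..s}) \<and>
           XN N \<omega> s = real N *\<^sub>R x0
             + (\<Sum>k\<in>UNIV. Y k \<omega> (integral {0..s} (\<lambda>u. aN N k (XN N \<omega> u))) *\<^sub>R \<nu> k))"
    and XN_bdd: "\<exists>\<Gamma>. \<forall>N. N \<ge> 1 \<and> real N *\<^sub>R x0 \<in> Zplus \<longrightarrow>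
        (AE \<omega> in M. \<forall>s\<ge>0. norm (XN N \<omega> s /\<^sub>R real N) \<le> \<Gamma>)"
    and X_cont: "continuous_on {0..} X"
    and X_eq: "\<forall>s\<ge>0. X s = x0 + (\<Sum>k\<in>UNIV. integral {0..s} (\<lambda>u. a k (X u)) *\<^sub>R \<nu> k)"
    and t_pos: "t > 0"
  shows "AE \<omega> in M.
    filterlim (\<lambda>N. SUP s\<in>{0..t}.
        \<bar>Y j \<omega> (integral {0..s} (\<lambda>u. aN N j (XN N \<omega> u))) / real N
          - integral {0..s} (\<lambda>u. a j (X u))\<bar>)
      (nhds 0) (inf sequentially (principal {N. N \<ge> 1 \<and> real N *\<^sub>R x0 \<in> Zplus}))"
proof -
  interpret prob_space M by (rule M_prob)
  define S where "S = {N. N \<ge> 1 \<and> real N *\<^sub>R x0 \<in> Zplus}"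
  obtain \<Gamma> where \<Gamma>: "\<forall>N. N \<ge> 1 \<and> real N *\<^sub>R x0 \<in> Zplus \<longrightarrow>
        (AE \<omega> in M. \<forall>s\<ge>0. norm (XN N \<omega> s /\<^sub>R real N) \<le> \<Gamma>)" using XN_bdd by blast
  have AE1: "AE \<omega> in M. \<forall>k. PoisGood (Y k \<omega>)"
    unfolding AE_all_countable using pois_good[OF M_prob] Y_poisson by blast
  have AE2: "AE \<omega> in M. \<forall>N. N \<in> S \<longrightarrow> (\<forall>s\<ge>0. XN N \<omega> s \<in> Zplus) \<and>
      (\<forall>s\<ge>0. (\<forall>k. (\<lambda>u. aN N k (XN N \<omega> u)) integrable_on {0..s}) \<and>
           XN N \<omega> s = real N *\<^sub>R x0
             + (\<Sum>k\<in>UNIV. Y k \<omega> (integral {0..s} (\<lambda>u. aN N k (XN N \<omega> u))) *\<^sub>R \<nu> k)) \<and>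
      (\<forall>s\<ge>0. norm (XN N \<omega> s /\<^sub>R real N) \<le> \<Gamma>)"
    unfolding AE_all_countable
  proof
    fix N
    show "AE \<omega> in M. N \<in> S \<longrightarrow> (\<forall>s\<ge>0. XN N \<omega> s \<in> Zplus) \<and>
      (\<forall>s\<ge>0. (\<forall>k. (\<lambda>u. aN N k (XN N \<omega> u)) integrable_on {0..s}) \<and>
           XN N \<omega> s = real N *\<^sub>R x0
             + (\<Sum>k\<in>UNIV. Y k \<omega> (integral {0..s} (\<lambda>u. aN N k (XN N \<omega> u))) *\<^sub>R \<nu> k)) \<and>
      (\<forall>s\<ge>0. norm (XN N \<omega> s /\<^sub>R real N) \<le> \<Gamma>)"
    proof (cases "N \<in> S")
      case True
      hence NS: "N \<ge> 1 \<and> real N *\<^sub>R x0 \<in> Zplus" unfolding S_def by simp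
      have h1: "AE \<omega> in M. \<forall>s\<ge>0. XN N \<omega> s \<in> Zplus" using XN_state NS by blast
      have h2: "AE \<omega> in M. \<forall>s\<ge>0. (\<forall>k. (\<lambda>u. aN N k (XN N \<omega> u)) integrable_on {0..s}) \<and>
           XN N \<omega> s = real N *\<^sub>R x0
             + (\<Sum>k\<in>UNIV. Y k \<omega> (integral {0..s} (\<lambda>u. aN N k (XN N \<omega> u))) *\<^sub>R \<nu> k)"
        using XN_eq NS by blast
      have h3: "AE \<omega> in M. \<forall>s\<ge>0. norm (XN N \<omega> s /\<^sub>R real N) \<le> \<Gamma>" using \<Gamma> NS by blast
      from h1 h2 h3 show ?thesis by eventually_elim blast
    qed simp
  qed
  have aN_nonneg: "\<forall>N k x. x \<in> Zplus \<longrightarrow> 0 \<le> aN N k x"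
    using aN_def c_pos bN_nonneg by (simp add: less_imp_le)
  from AE1 AE2 show ?thesis
  proof eventually_elim
    case (elim \<omega>)
    show ?case unfolding S_def[symmetric]
    proof (rule det_main[where \<Gamma> = \<Gamma>])
      show "\<forall>N k x. x \<in> Zplus \<longrightarrow> 0 \<le> aN N k x" by (rule aN_nonneg)
      show "\<forall>K. compact K \<and> K \<subseteq> Rplus \<longrightarrow>
        (\<exists>B>0. \<forall>x\<in>K. \<forall>N\<ge>1. \<forall>k. \<bar>aN N k (real N *\<^sub>R x) / real N - a k x\<bar> \<le> B / real N)" by (rule a_rate)
      show "\<forall>k. \<exists>D :: (real ^ 'n) \<Rightarrow> ((real ^ 'n) \<Rightarrow>\<^sub>L real).
        (\<forall>x. (a k has_derivative blinfun_apply (D x)) (at x)) \<and> continuous_on UNIV D" by (rule a_C1)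
      show "\<forall>k. PoisGood (Y k \<omega>)" using elim(1) .
      show "\<forall>N\<in>S. 1 \<le> N" unfolding S_def by simp
      show "\<forall>N\<in>S. \<forall>s\<ge>0. XN N \<omega> s \<in> Zplus" using elim(2) by blast
      show "\<forall>N\<in>S. \<forall>s\<ge>0. (\<forall>k. (\<lambda>u. aN N k (XN N \<omega> u)) integrable_on {0..s}) \<and>
           XN N \<omega> s = real N *\<^sub>R x0 + (\<Sum>k\<in>UNIV. Y k \<omega> (integral {0..s} (\<lambda>u. aN N k (XN N \<omega> u))) *\<^sub>R \<nu> k)"
        using elim(2) by blast
      show "\<forall>N\<in>S. \<forall>s\<ge>0. norm (XN N \<omega> s /\<^sub>R real N) \<le> \<Gamma>" using elim(2) by blast
      show "continuous_on {0..} X" by (rule X_cont)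
      show "\<forall>s\<ge>0. X s = x0 + (\<Sum>k\<in>UNIV. integral {0..s} (\<lambda>u. a k (X u)) *\<^sub>R \<nu> k)" by (rule X_eq)
      show "t > 0" by (rule t_pos)
    qed
  qed
qed

end
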